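(* Let $A,B\in\mathbb{R}^{m_1\times m_2}$ and $a>0$. Then $$\mathrm{TL1}_a\big(A+P_A^\perp(B)\big)=\mathrm{TL1}_a(A)+\mathrm{TL1}_a\big(P_A^\perp(B)\big).$$
   Context: For $a>0$ and a matrix $X\in\mathbb{R}^{m_1\times m_2}$ with singular values $\sigma_1(X)\ge\dots\ge\sigma_m(X)$, $m=\min\{m_1,m_2\}$, define $\mathrm{TL1}_a(X)=\sum_{j=1}^m\frac{(a+1)\sigma_j(X)}{a+\sigma_j(X)}$. For $A$ with SVD $A=U_AD_AV_A^\top$ (compact, over the nonzero singular values), let $S_U(A)$, $S_V(A)$ be the linear subspaces spanned by the columns of $U_A$, $V_A$, and $S_U^\perp(A)$, $S_V^\perp(A)$ their orthogonal complements. With $\mathbf{P}_S$ the orthogonal projection onto a subspace $S$, define $P_A^\perp(B)=\mathbf{P}_{S_U^\perp(A)}\,B\,\mathbf{P}_{S_V^\perp(A)}$. *)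

theory Defs
  imports "HOL-Analysis.Analysis" "HOL-Computational_Algebra.Polynomial"
begin

text \<open>Matrices in R^(m1 x m2) are rendered as real^'n^'m with m1 = CARD('m), m2 = CARD('n).\<close>

definition charpoly :: "real^'n^'n \<Rightarrow> real poly" where
  "charpoly M = det (\<chi> i j. (if i = j then [:0, 1:] else 0) - [:M$i$j:])"

definition singular_values :: "real^'n^'m \<Rightarrow> real list" where
  "singular_values X =
     rev (sorted_list_of_multiset (image_mset sqrt (proots (charpoly (transpose X ** X)))))"

definition TL1 :: "real \<Rightarrow> real^'n^'m \<Rightarrow> real" where
  "TL1 a X = (\<Sum>j < min CARD('m) CARD('n).
      (a + 1) * (singular_values X ! j) / (a + singular_values X ! j))"

definition orth_compl :: "('a::real_inner) set \<Rightarrow> 'a set" where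
  "orth_compl S = {x. \<forall>y\<in>S. orthogonal x y}"

definition orth_proj :: "('a::real_inner) set \<Rightarrow> 'a \<Rightarrow> 'a" where
  "orth_proj S x = (THE y. y \<in> S \<and> (\<forall>z\<in>S. orthogonal (x - y) z))"

definition proj_mat :: "(real^'n) set \<Rightarrow> real^'n^'n" where
  "proj_mat S = matrix (orth_proj S)"

text \<open>S_U(A): column space of A (= span of columns of U_A); S_V(A): row space (= span of columns of V_A).\<close>
definition S_U :: "real^'n^'m \<Rightarrow> (real^'m) set" where
  "S_U A = span (columns A)"

definition S_V :: "real^'n^'m \<Rightarrow> (real^'n) set" where
  "S_V A = span (rows A)"

definition P_perp :: "real^'n^'m \<Rightarrow> real^'n^'m \<Rightarrow> real^'n^'m" where
  "P_perp A B = proj_mat (orth_compl (S_U A)) ** B ** proj_mat (orth_compl (S_V A))"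

end

theory Submission
  imports Defs "HOL-Computational_Algebra.Fundamental_Theorem_Algebra"
begin

lemma hom_sum_gen:
  fixes h :: "'a::comm_ring_1 \<Rightarrow> 'b::comm_ring_1"
  assumes add: "\<And>x y. h (x+y) = h x + h y"
  shows "h (sum f S) = sum (\<lambda>x. h (f x)) S"
proof -
  have h0: "h 0 = 0" using add[of 0 0] by simp
  show ?thesis by (induction S rule: infinite_finite_induct) (auto simp: h0 add)
qed

lemma hom_prod_gen:
  fixes h :: "'a::comm_ring_1 \<Rightarrow> 'b::comm_ring_1"
  assumes mult: "\<And>x y. h (x*y) = h x * h y" and one: "h 1 = 1"
  shows "h (prod f S) = prod (\<lambda>x. h (f x)) S"
  by (induction S rule: infinite_finite_induct) (auto simp: one mult)

lemma hom_of_int_gen: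
  fixes h :: "'a::comm_ring_1 \<Rightarrow> 'b::comm_ring_1"
  assumes add: "\<And>x y. h (x+y) = h x + h y" and one: "h 1 = 1" and neg: "\<And>x. h (-x) = - h x"
  shows "h (of_int k) = of_int k"
proof -
  have h0: "h 0 = 0" using add[of 0 0] by simp
  have nat: "h (of_nat n) = of_nat n" for n by (induction n) (auto simp: h0 add one)
  have "k = int (nat k) \<or> k = - int (nat (-k))" by auto
  then show ?thesis
  proof
    assume "k = int (nat k)" then show ?thesis by (metis nat of_int_of_nat_eq)
  next
    assume "k = - int (nat (-k))" then show ?thesis by (metis nat neg of_int_minus of_int_of_nat_eq)
  qed
qed

lemma det_hom:
  fixes h :: "'a::comm_ring_1 \<Rightarrow> 'b::comm_ring_1" and A :: "'a^'n^'n"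
  assumes add: "\<And>x y. h (x+y) = h x + h y" and mult: "\<And>x y. h (x*y) = h x * h y"
    and one: "h 1 = 1" and neg: "\<And>x. h (-x) = - h x"
  shows "det (\<chi> i j. h (A$i$j)) = h (det A)"
  unfolding det_def
  by (simp add: hom_sum_gen[of h, OF add] hom_prod_gen[of h, OF mult one] mult
      hom_of_int_gen[of h, OF add one neg])

definition cpoly :: "'a::comm_ring_1^'n^'n \<Rightarrow> 'a poly" where
  "cpoly M = det (\<chi> i j. (if i = j then [:0, 1:] else 0) - [:M$i$j:])"

lemma charpoly_cpoly: "charpoly M = cpoly M"
  unfolding charpoly_def cpoly_def ..

lemma poly_cpoly:
  "poly (cpoly M) z = det (\<chi> i j. (if i = j then z else 0) - M$i$j)"
proof -
  have "poly (cpoly M) z = det (\<chi> i j. poly ((\<chi> i j. (if i = j then [:0, 1:] else 0) - [:M$i$j:])$i$j) z)"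
    unfolding cpoly_def by (rule det_hom[symmetric]) auto
  also have "\<dots> = det (\<chi> i j. (if i = j then z else 0) - M$i$j)"
    by (rule arg_cong[where f=det]) (simp add: vec_eq_iff)
  finally show ?thesis .
qed

lemma map_poly_of_real_add: "map_poly of_real (p + q) = (map_poly of_real p + map_poly of_real q :: 'a::{real_algebra_1} poly)"
  by (rule poly_eqI) (simp add: coeff_map_poly)

lemma map_poly_of_real_mult: "map_poly of_real (p * q) = (map_poly of_real p * map_poly of_real q :: 'a::{real_algebra_1,comm_ring_1} poly)"
  by (rule poly_eqI) (simp add: coeff_map_poly coeff_mult of_real_sum)

lemma map_poly_of_real_neg: "map_poly of_real (- p) = (- map_poly of_real p :: 'a::{real_algebra_1} poly)"
  by (rule poly_eqI) (simp add: coeff_map_poly)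

lemma map_cpoly:
  fixes M :: "real^'n^'n"
  shows "map_poly of_real (cpoly M) = (cpoly (\<chi> i j. of_real (M$i$j)) :: 'a::{real_algebra_1,comm_ring_1} poly)"
proof -
  have "map_poly of_real (cpoly M) = (det (\<chi> i j. map_poly of_real ((\<chi> i j. (if i = j then [:0, 1:] else 0) - [:M$i$j:])$i$j)) :: 'a poly)"
    unfolding cpoly_def
    by (rule det_hom[symmetric]) (auto simp: map_poly_of_real_add map_poly_of_real_mult map_poly_of_real_neg)
  also have "\<dots> = cpoly (\<chi> i j. of_real (M$i$j))"
    unfolding cpoly_def
    by (rule arg_cong[where f=det]) (simp add: vec_eq_iff map_poly_of_real_add map_poly_of_real_neg[unfolded minus_poly_def] diff_conv_add_uminus map_poly_pCons)
  finally show ?thesis .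
qed



lemma cpoly_degree_lead:
  fixes M :: "'a::idom^'n^'n"
  shows "degree (cpoly M) = CARD('n) \<and> lead_coeff (cpoly M) = 1"
proof -
  define E :: "'a poly^'n^'n" where "E = (\<chi> i j. (if i = j then [:0, 1:] else 0) - [:M$i$j:])"
  define T where "T = (\<lambda>p. of_int (sign p) * prod (\<lambda>i. E$i$p i) (UNIV :: 'n set))"
  define P where "P = {p. p permutes (UNIV :: 'n set)}"
  have fP: "finite P" unfolding P_def by (simp add: finite_permutations)
  have idP: "id \<in> P" unfolding P_def by (simp add: permutes_id)
  have cp: "cpoly M = T id + sum T (P - {id})"
    unfolding cpoly_def det_def E_def[symmetric] T_def[symmetric] P_def[symmetric]
    using sum.remove[OF fP idP] by simp
  have Tid: "T id = (\<Prod>i\<in>UNIV. [:- M$i$i, 1:])"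
    unfolding T_def E_def by (simp add: sign_id)
  have degid: "degree (T id) = CARD('n)"
    unfolding Tid by (simp add: degree_prod_sum_eq)
  have lcid: "lead_coeff (T id) = 1"
    unfolding Tid by (simp only: lead_coeff_prod) simp
  have degE: "degree (E$i$j) \<le> (if i = j then 1 else 0)" for i j
    unfolding E_def by (auto simp: degree_diff_le)
  have degE1: "degree (E$i$j) \<le> 1" for i j
    using degE[of i j] by (auto split: if_splits)
  have degrest: "degree (T p) \<le> CARD('n) - 1" if "p \<in> P - {id}" for p
  proof -
    from that have "p \<noteq> id" by auto
    then obtain k where k: "p k \<noteq> k" by (metis eq_id_iff)
    have "degree (T p) \<le> degree (prod (\<lambda>i. E$i$p i) (UNIV :: 'n set))"
      unfolding T_def by (cases "sign p = (1::int)") (auto simp: sign_def)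
    also have "\<dots> \<le> sum (\<lambda>i. degree (E$i$p i)) UNIV"
      using degree_prod_sum_le[of UNIV "\<lambda>i. E$i$p i"] by (simp add: o_def)
    also have "\<dots> \<le> sum (\<lambda>i. if i = k then 0 else 1) (UNIV :: 'n set)"
      by (rule sum_mono) (use degE[of k "p k"] k degE1 in \<open>auto\<close>)
    also have "\<dots> = CARD('n) - 1"
      by (simp add: sum.If_cases Compl_eq_Diff_UNIV card_Diff_singleton)
    finally show ?thesis .
  qed
  have degs: "degree (sum T (P - {id})) \<le> CARD('n) - 1"
    by (rule degree_sum_le) (use fP degrest in auto)
  have lt: "degree (sum T (P - {id})) < degree (T id)"
  proof -
    have "CARD('n) > 0" by simp
    then show ?thesis using degs degid by linarith
  qed
  show ?thesis
    unfolding cp using lt degid lcid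
    by (simp add: degree_add_eq_left lead_coeff_add_le coeff_eq_0)
qed



lemma det_zero_kernel:
  fixes N :: "'a::field^'n^'n"
  assumes "det N = 0"
  obtains v where "v \<noteq> 0" "N *v v = 0"
proof -
  have "\<not> inj ((*v) N)" using det_nz_iff_inj_gen[of "(*v) N"] assms by simp
  then obtain x y where "x \<noteq> y" "N *v x = N *v y" unfolding inj_def by blast
  then show ?thesis using that[of "x - y"] by (simp add: matrix_vector_mult_diff_distrib)
qed

lemma sym_complex_root_real:
  fixes M :: "real^'n^'n"
  assumes sym: "transpose M = M"
    and root: "poly (map_poly of_real (cpoly M)) (z::complex) = 0"
  shows "Im z = 0"
proof -
  define MC :: "complex^'n^'n" where "MC = (\<chi> i j. of_real (M$i$j))"
  define N where "N = (\<chi> i j. (if i = j then z else 0) - MC$i$j)"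
  have "det N = 0" using root unfolding map_cpoly poly_cpoly N_def MC_def .
  then obtain v where v0: "v \<noteq> 0" and vN: "N *v v = 0" by (rule det_zero_kernel)
  define a where "a = (\<lambda>i. Re (v$i))"
  define b where "b = (\<lambda>i. Im (v$i))"
  have Msym: "M$i$j = M$j$i" for i j using sym by (metis transpose_def vec_lambda_beta)
  have eq: "z * v$i = (\<Sum>j\<in>UNIV. of_real (M$i$j) * v$j)" for i
  proof -
    have "(N *v v)$i = 0" using vN by simp
    then have "(\<Sum>j\<in>UNIV. ((if i = j then z else 0) - of_real (M$i$j)) * v$j) = 0"
      by (simp add: matrix_vector_mult_def N_def MC_def)
    moreover have "(\<Sum>j\<in>UNIV. ((if i = j then z else 0) - of_real (M$i$j)) * v$j)
       = (\<Sum>j\<in>UNIV. (if i = j then z * v$j else 0)) - (\<Sum>j\<in>UNIV. of_real (M$i$j) * v$j)"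
      unfolding sum_subtractf[symmetric] by (rule sum.cong) (auto simp: left_diff_distrib)
    ultimately have "z * v$i - (\<Sum>j\<in>UNIV. of_real (M$i$j) * v$j) = 0"
      by simp
    then show ?thesis by simp
  qed
  have eqRe: "Re z * a i - Im z * b i = (\<Sum>j\<in>UNIV. M$i$j * a j)" for i
    using arg_cong[OF eq[of i], of Re] by (simp add: a_def b_def Re_sum)
  have eqIm: "Im z * a i + Re z * b i = (\<Sum>j\<in>UNIV. M$i$j * b j)" for i
    using arg_cong[OF eq[of i], of Im] by (simp add: a_def b_def Im_sum)
  have "(\<Sum>i\<in>UNIV. a i * (\<Sum>j\<in>UNIV. M$i$j * b j)) = (\<Sum>j\<in>UNIV. b j * (\<Sum>i\<in>UNIV. M$j$i * a i))"
  proof -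
    have "(\<Sum>i\<in>UNIV. a i * (\<Sum>j\<in>UNIV. M$i$j * b j)) = (\<Sum>i\<in>UNIV. \<Sum>j\<in>UNIV. a i * M$i$j * b j)"
      by (simp add: sum_distrib_left mult.assoc)
    also have "\<dots> = (\<Sum>j\<in>UNIV. \<Sum>i\<in>UNIV. a i * M$i$j * b j)"
      by (rule sum.swap)
    also have "\<dots> = (\<Sum>j\<in>UNIV. b j * (\<Sum>i\<in>UNIV. M$j$i * a i))"
      by (simp add: sum_distrib_left Msym mult.commute mult.left_commute)
    finally show ?thesis .
  qed
  then have "(\<Sum>i\<in>UNIV. a i * (Im z * a i + Re z * b i)) = (\<Sum>j\<in>UNIV. b j * (Re z * a j - Im z * b j))"
    by (simp add: eqRe eqIm)
  then have "Im z * (\<Sum>i\<in>UNIV. a i ^ 2 + b i ^ 2) = 0"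
    by (simp add: algebra_simps sum.distrib sum_subtractf sum_distrib_left power2_eq_square)
  moreover have "(\<Sum>i\<in>UNIV. a i ^ 2 + b i ^ 2) > 0"
  proof -
    obtain k where "v$k \<noteq> 0" using v0 by (metis vec_eq_iff zero_index)
    then have "a k ^ 2 + b k ^ 2 > 0" unfolding a_def b_def
      by (metis complex_eq_iff sum_power2_gt_zero_iff zero_complex.sel)
    then show ?thesis
      by (intro sum_pos2[of UNIV k]) auto
  qed
  ultimately show ?thesis by simp
qed



lemma map_poly_of_real_prod_mset:
  "map_poly of_real (prod_mset (image_mset f R)) = (prod_mset (image_mset (\<lambda>r. map_poly of_real (f r)) R) :: 'a::{real_algebra_1,comm_ring_1} poly)"
  by (induction R) (auto simp: map_poly_of_real_mult)

lemma map_poly_of_real_inj: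
  assumes "map_poly (of_real :: real \<Rightarrow> 'a::real_algebra_1) p = map_poly of_real q"
  shows "p = q"
proof (rule poly_eqI)
  fix n
  have "coeff (map_poly (of_real :: real \<Rightarrow> 'a) p) n = coeff (map_poly of_real q) n" using assms by simp
  then show "coeff p n = coeff q n" by (simp add: coeff_map_poly)
qed

lemma real_rooted_size:
  fixes p :: "real poly"
  assumes p0: "p \<noteq> 0" and rr: "\<And>z. poly (map_poly of_real p) z = 0 \<Longrightarrow> Im z = 0"
  shows "size (proots p) = degree p"
proof -
  define q :: "complex poly" where "q = map_poly of_real p"
  have q0: "q \<noteq> 0" using p0 unfolding q_def by (simp add: map_poly_eq_0_iff)
  have degq: "degree q = degree p" unfolding q_def by (simp add: degree_map_poly)
  have lcq: "lead_coeff q = of_real (lead_coeff p)" unfolding q_def by (simp add: degree_map_poly coeff_map_poly)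
  define R where "R = image_mset Re (proots q)"
  have real: "of_real (Re x) = x" if "x \<in># proots q" for x
  proof -
    have "poly q x = 0" using that q0 by simp
    then have "Im x = 0" using rr unfolding q_def by blast
    then show ?thesis by (simp add: complex_eq_iff)
  qed
  define p' where "p' = smult (lead_coeff p) (\<Prod>r\<in>#R. [:-r, 1:])"
  have "map_poly of_real p' = smult (of_real (lead_coeff p)) (map_poly of_real (\<Prod>r\<in>#R. [:-r, 1:]))"
    unfolding p'_def by (rule map_poly_smult) auto
  also have "map_poly of_real (\<Prod>r\<in>#R. [:-r, 1:]) = (\<Prod>r\<in>#R. map_poly of_real [:-r, 1:] :: complex poly)"
    by (rule map_poly_of_real_prod_mset)
  also have "\<dots> = (\<Prod>x\<in>#proots q. [:-x, 1:])"
    unfolding R_def multiset.map_comp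
    by (rule arg_cong[where f=prod_mset], rule image_mset_cong) (auto simp: map_poly_pCons real)
  also have "smult (of_real (lead_coeff p)) \<dots> = q"
    using complex_poly_decompose_multiset[of q] lcq by simp
  finally have "p' = p" unfolding q_def by (rule map_poly_of_real_inj)
  then have "proots p = proots (\<Prod>r\<in>#R. [:-r, 1:])"
  proof -
    have "lead_coeff p \<noteq> 0" using p0 by simp
    then show ?thesis using \<open>p' = p\<close> unfolding p'_def by (metis proots_smult)
  qed
  also have "\<dots> = R"
  proof (induction R)
    case (add x R)
    have "(\<Prod>r\<in>#R. [:-r, 1:]) \<noteq> 0" by (auto simp: prod_mset_zero_iff)
    moreover have "[:-x, 1:] \<noteq> 0" by simp
    ultimately have "proots ([:-x, 1:] * (\<Prod>r\<in>#R. [:-r, 1:])) = proots [:-x, 1:] + R"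
      using add by (metis proots_mult)
    moreover have "proots [:-x, 1:] = {#x#}" using proots_linear_factor[of "-x"] by simp
    ultimately show ?case by simp
  qed simp
  finally have "size (proots p) = size (proots q)" unfolding R_def by simp
  also have "\<dots> = degree p" using size_proots_complex degq by simp
  finally show ?thesis .
qed

lemma sym_size_proots:
  fixes M :: "real^'n^'n"
  assumes sym: "transpose M = M"
  shows "size (proots (cpoly M)) = CARD('n)"
proof -
  have dl: "degree (cpoly M) = CARD('n)" "lead_coeff (cpoly M) = 1" using cpoly_degree_lead[of M] by auto
  then have "cpoly M \<noteq> 0" by auto
  then show ?thesis using real_rooted_size[of "cpoly M"] sym_complex_root_real[OF sym] dl by auto
qed



lemma det_cols_dvd:
  fixes A :: "'a::comm_ring_1^'n^'n"
  assumes dv: "\<And>r c. c \<in> J \<Longrightarrow> x dvd A$r$c"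
  shows "x ^ card J dvd det A"
  unfolding det_def
proof (rule dvd_sum)
  fix p assume "p \<in> {p. p permutes (UNIV :: 'n set)}"
  then have pb: "bij p" by (simp add: permutes_bij)
  define I where "I = {i. p i \<in> J}"
  have "p ` I = J" unfolding I_def using pb by (auto simp: bij_def surj_def)
  moreover have "inj_on p I" using pb by (simp add: bij_def inj_on_def inj_def)
  ultimately have cI: "card I = card J" by (metis card_image)
  have "x ^ card I = prod (\<lambda>_. x) I" by simp
  also have "\<dots> dvd prod (\<lambda>i. A$i$p i) I"
    by (rule prod_dvd_prod) (auto simp: I_def dv)
  also have "\<dots> dvd prod (\<lambda>i. A$i$p i) (UNIV - I) * prod (\<lambda>i. A$i$p i) I" by simp
  also have "\<dots> = prod (\<lambda>i. A$i$p i) UNIV"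
    by (rule prod.subset_diff[symmetric]) auto
  finally show "x ^ card J dvd of_int (sign p) * prod (\<lambda>i. A$i$p i) UNIV"
    using cI by (simp add: dvd_mult)
qed

lemma ker_dvd_cpoly:
  fixes M :: "real^'n^'n"
  assumes B: "independent B" and ker: "\<And>v. v \<in> B \<Longrightarrow> M *v v = 0"
  shows "[:0,1:] ^ card B dvd cpoly M"
proof -
  define E where "E = extend_basis B"
  have BE: "B \<subseteq> E" and iE: "independent E" and sE: "span E = UNIV"
    unfolding E_def using B by (auto simp: real_vector.extend_basis_superset real_vector.independent_extend_basis real_vector.span_extend_basis)
  have fE: "finite E" using iE by (rule eucl.finiteI_independent)
  have fB: "finite B" using fE BE finite_subset by blast
  have cE: "card E = CARD('n)"
  proof -
    have "dim E = card E" using iE by (rule dim_eq_card_independent)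
    moreover have "dim E = dim (UNIV :: (real^'n) set)" using sE by (metis dim_span)
    ultimately show ?thesis by simp
  qed
  have "card B \<le> card (UNIV :: 'n set)" using BE fE cE card_mono by fastforce
  then obtain J :: "'n set" where J: "J \<subseteq> UNIV" "card J = card B" "finite J"
    using obtain_subset_with_card_n by blast
  obtain g1 where g1: "bij_betw g1 J B" using finite_same_card_bij[OF J(3) fB J(2)] by blast
  have "card (UNIV - J) = card (E - B)"
    using J fB BE fE cE by (simp add: card_Diff_subset)
  then obtain g2 where g2: "bij_betw g2 (UNIV - J) (E - B)"
    using finite_same_card_bij[of "UNIV - J" "E - B"] fE by auto
  define g where "g = (\<lambda>i. if i \<in> J then g1 i else g2 i)"
  have gb: "bij_betw g UNIV E"
  proof -
    have "bij_betw g J B" using g1 by (rule bij_betw_cong[THEN iffD1, rotated]) (auto simp: g_def)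
    moreover have "bij_betw g (UNIV - J) (E - B)" using g2 by (rule bij_betw_cong[THEN iffD1, rotated]) (auto simp: g_def)
    ultimately have "bij_betw g (J \<union> (UNIV - J)) (B \<union> (E - B))"
      by (rule bij_betw_combine) auto
    moreover have "J \<union> (UNIV - J) = UNIV" "B \<union> (E - B) = E" using BE by auto
    ultimately show ?thesis by simp
  qed
  have gJ: "g c \<in> B" if "c \<in> J" for c using g1 that by (auto simp: g_def bij_betw_def)
  define Q :: "real^'n^'n" where "Q = (\<chi> r c. g c $ r)"
  have colQ: "column c Q = g c" for c by (simp add: column_def Q_def vec_eq_iff)
  have "columns Q = E" using gb unfolding columns_def colQ bij_betw_def by auto
  then have "rank Q = CARD('n)" using iE cE by (simp add: column_rank_def dim_eq_card_independent)
  then have dQ: "det Q \<noteq> 0" by (simp add: det_eq_0_rank)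
  define Qp :: "real poly^'n^'n" where "Qp = (\<chi> r c. [:Q$r$c:])"
  have detQp: "det Qp = [:det Q:]"
    unfolding Qp_def by (rule det_hom) auto
  define Xp :: "real poly^'n^'n" where "Xp = (\<chi> i j. (if i = j then [:0, 1:] else 0) - [:M$i$j:])"
  have "det (Xp ** Qp) = cpoly M * [:det Q:]"
    by (simp add: det_mul detQp Xp_def cpoly_def)
  moreover have "[:0,1:] ^ card J dvd det (Xp ** Qp)"
  proof (rule det_cols_dvd)
    fix r c assume c: "c \<in> J"
    have Mg: "(\<Sum>k\<in>UNIV. M$r$k * Q$k$c) = 0"
      using ker[OF gJ[OF c]] by (simp add: matrix_vector_mult_def Q_def vec_eq_iff)
    have "(Xp ** Qp)$r$c = (\<Sum>k\<in>UNIV. (if r = k then [:0, 1:] else 0) * [:Q$k$c:]) - (\<Sum>k\<in>UNIV. [:M$r$k:] * [:Q$k$c:])"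
      unfolding sum_subtractf[symmetric] by (simp add: matrix_matrix_mult_def Xp_def Qp_def left_diff_distrib smult_diff_right)
    also have "(\<Sum>k\<in>UNIV. [:M$r$k:] * [:Q$k$c:]) = [:\<Sum>k\<in>UNIV. M$r$k * Q$k$c:]"
    proof -
      have "(\<Sum>k\<in>UNIV. [:M$r$k:] * [:Q$k$c:]) = (\<Sum>k\<in>UNIV. [:M$r$k * Q$k$c:])" by (simp add: mult.commute)
      also have "\<dots> = [:\<Sum>k\<in>UNIV. M$r$k * Q$k$c:]" by (rule hom_sum_gen[where h="\<lambda>a. [:a:]", symmetric]) simp
      finally show ?thesis .
    qed
    also have "(\<Sum>k\<in>UNIV. (if r = k then [:0, 1:] else 0) * [:Q$k$c:]) = [:0, 1:] * [:Q$r$c:]"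
    proof -
      have "(\<Sum>k\<in>UNIV. (if r = k then [:0, 1:] else 0) * [:Q$k$c:]) = (\<Sum>k\<in>UNIV. if r = k then [:0, 1:] * [:Q$k$c:] else 0)"
        by (rule sum.cong) auto
      also have "\<dots> = [:0, 1:] * [:Q$r$c:]" by (subst sum.delta') auto
      finally show ?thesis .
    qed
    finally have "(Xp ** Qp)$r$c = [:0, 1:] * [:Q$r$c:]" using Mg by simp
    then show "[:0,1:] dvd (Xp ** Qp)$r$c" by (metis dvd_triv_left)
  qed
  ultimately have "[:0,1:] ^ card B dvd cpoly M * [:det Q:]" using J by simp
  moreover have "is_unit [:det Q:]" using dQ by (simp add: is_unit_const_poly_iff dvd_field_iff)
  ultimately show ?thesis by (metis dvd_mult_unit_iff)
qed



lemma gram_roots_nonneg: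
  fixes X :: "real^'n^'m"
  assumes "r \<in># proots (cpoly (transpose X ** X))"
  shows "r \<ge> 0"
proof -
  define M where "M = transpose X ** X"
  have "cpoly M \<noteq> 0" using cpoly_degree_lead[of M] by auto
  then have "poly (cpoly M) r = 0" using assms unfolding M_def by simp
  then have "det (\<chi> i j. (if i = j then r else 0) - M$i$j) = 0" by (simp add: poly_cpoly)
  then obtain v where v0: "v \<noteq> 0" and vN: "(\<chi> i j. (if i = j then r else 0) - M$i$j) *v v = 0"
    by (rule det_zero_kernel)
  have Mv: "M *v v = r *\<^sub>R v"
  proof -
    have "((\<chi> i j. (if i = j then r else 0) - M$i$j) *v v) = r *\<^sub>R v - M *v v"
    proof (subst vec_eq_iff, intro allI)
      fix i
      have "((\<chi> i j. (if i = j then r else 0) - M$i$j) *v v)$i = (\<Sum>j\<in>UNIV. ((if i = j then r else 0) - M$i$j) * v$j)"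
        by (simp add: matrix_vector_mult_def)
      also have "\<dots> = (\<Sum>j\<in>UNIV. (if i = j then r * v$j else 0) - M$i$j * v$j)"
        by (rule sum.cong) (auto simp: left_diff_distrib)
      also have "\<dots> = (\<Sum>j\<in>UNIV. (if i = j then r * v$j else 0)) - (\<Sum>j\<in>UNIV. M$i$j * v$j)"
        by (rule sum_subtractf)
      also have "\<dots> = (r *\<^sub>R v - M *v v)$i"
        by (simp add: matrix_vector_mult_def)
      finally show "((\<chi> i j. (if i = j then r else 0) - M$i$j) *v v)$i = (r *\<^sub>R v - M *v v)$i" .
    qed
    then show ?thesis using vN by simp
  qed
  have "v \<bullet> (M *v v) = (X *v v) \<bullet> (X *v v)"
  proof -
    have "M *v v = transpose X *v (X *v v)" unfolding M_def by (simp add: matrix_vector_mul_assoc)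
    also have "\<dots> = (X *v v) v* X" by simp
    finally have "v \<bullet> (M *v v) = ((X *v v) v* X) \<bullet> v" by (simp add: inner_commute)
    also have "\<dots> = (X *v v) \<bullet> (X *v v)" by (rule dot_lmul_matrix)
    finally show ?thesis .
  qed
  then have "r * (v \<bullet> v) \<ge> 0" using Mv by simp
  moreover have "v \<bullet> v > 0" using v0 by simp
  ultimately show ?thesis by (simp add: zero_le_mult_iff)
qed

lemma gram_zero_mult:
  fixes X :: "real^'n^'m"
  shows "count (proots (cpoly (transpose X ** X))) 0 \<ge> CARD('n) - CARD('m)"
proof -
  define M where "M = transpose X ** X"
  define S where "S = span (rows X)"
  define K where "K = {y \<in> UNIV. \<forall>x\<in>S. orthogonal x y}"
  have "dim K + dim S = dim (UNIV :: (real^'n) set)"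
    unfolding K_def S_def by (rule dim_subspace_orthogonal_to_vectors) auto
  moreover have "dim S = rank X" unfolding S_def by (simp add: row_rank_def)
  moreover have "rank X \<le> CARD('m)" using rank_bound[of X] by simp
  ultimately have dK: "dim K \<ge> CARD('n) - CARD('m)" by simp
  obtain B where B: "B \<subseteq> K" "independent B" "K \<subseteq> span B" "card B = dim K"
    by (rule basis_exists)
  have ker: "M *v v = 0" if "v \<in> B" for v
  proof -
    have vK: "v \<in> K" using B that by auto
    have "X *v v = 0"
    proof (subst vec_eq_iff, intro allI)
      fix i
      have "row i X \<in> S" unfolding S_def by (auto simp: rows_def intro: span_base)
      then have "orthogonal (row i X) v" using vK unfolding K_def by auto
      then show "(X *v v)$i = 0$i"
        by (simp add: orthogonal_def matrix_vector_mult_def inner_vec_def row_def)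
    qed
    then show ?thesis unfolding M_def by (simp add: matrix_vector_mul_assoc[symmetric])
  qed
  have dv: "[:0,1:] ^ card B dvd cpoly M" by (rule ker_dvd_cpoly[OF B(2) ker])
  have nz: "cpoly M \<noteq> 0" using cpoly_degree_lead[of M] by auto
  have "card B \<le> order 0 (cpoly M)" using dv nz order_divides[of 0 "card B" "cpoly M"] by simp
  then show ?thesis using nz dK B(4) unfolding M_def by simp
qed



lemma subspace_orth_compl: "subspace (orth_compl (T :: ('a::real_inner) set))"
  unfolding subspace_def orth_compl_def orthogonal_def
  by (simp add: inner_add_left)

lemma orth_proj_props:
  fixes T :: "(real^'n) set"
  defines "S \<equiv> orth_compl T"
  shows "orth_proj S x \<in> S \<and> (\<forall>z\<in>S. orthogonal (x - orth_proj S x) z)"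
proof -
  have sub: "subspace S" unfolding S_def by (rule subspace_orth_compl)
  obtain y z where y: "y \<in> span S" and z: "\<And>w. w \<in> span S \<Longrightarrow> orthogonal z w" and xyz: "x = y + z"
    using orthogonal_subspace_decomp_exists[of S x] by blast
  have yS: "y \<in> S" using y sub by (metis span_eq_iff)
  have P: "y \<in> S \<and> (\<forall>w\<in>S. orthogonal (x - y) w)"
    using yS z xyz by (auto intro: span_base)
  have uniq: "y' = y" if "y' \<in> S \<and> (\<forall>w\<in>S. orthogonal (x - y') w)" for y'
  proof -
    have d: "y - y' \<in> S" using that yS sub by (simp add: subspace_diff)
    have "orthogonal (x - y') (y - y')" "orthogonal (x - y) (y - y')" using that P d by auto
    then have o1: "(x - y') \<bullet> (y - y') = 0" "(x - y) \<bullet> (y - y') = 0" by (simp_all add: orthogonal_def)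
    have "(y - y') \<bullet> (y - y') = ((x - y') - (x - y)) \<bullet> (y - y')"
      by (rule arg_cong[where f="\<lambda>u. u \<bullet> (y - y')"]) (simp add: algebra_simps)
    also have "\<dots> = (x - y') \<bullet> (y - y') - (x - y) \<bullet> (y - y')" by (rule inner_diff_left)
    finally have "(y - y') \<bullet> (y - y') = 0" using o1 by simp
    then show ?thesis by simp
  qed
  have "orth_proj S x = y" unfolding orth_proj_def
    using P uniq by (intro the_equality) blast+
  then show ?thesis using P by simp
qed

lemma orth_proj_selfadj:
  fixes T :: "(real^'n) set"
  defines "S \<equiv> orth_compl T"
  shows "orth_proj S x \<bullet> y = x \<bullet> orth_proj S y"
proof -
  let ?p = "orth_proj S"
  have px: "?p x \<in> S" "\<forall>z\<in>S. orthogonal (x - ?p x) z" using orth_proj_props[of T x] unfolding S_def by auto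
  have py: "?p y \<in> S" "\<forall>z\<in>S. orthogonal (y - ?p y) z" using orth_proj_props[of T y] unfolding S_def by auto
  have "?p x \<bullet> y = ?p x \<bullet> ?p y + ?p x \<bullet> (y - ?p y)" by (simp add: inner_diff_right)
  also have "?p x \<bullet> (y - ?p y) = 0" using py(2) px(1) by (simp add: orthogonal_def inner_commute)
  also have "x \<bullet> ?p y = ?p x \<bullet> ?p y + (x - ?p x) \<bullet> ?p y" by (simp add: inner_diff_left)
  moreover have "(x - ?p x) \<bullet> ?p y = 0" using px(2) py(1) by (simp add: orthogonal_def)
  ultimately show ?thesis by simp
qed

lemma proj_mat_entry:
  "proj_mat S $ k $ j = orth_proj S (axis j 1) $ k"
  unfolding proj_mat_def matrix_def by simp

lemma proj_mat_sym:
  fixes T :: "(real^'n) set"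
  shows "transpose (proj_mat (orth_compl T)) = proj_mat (orth_compl T)"
proof -
  have "orth_proj (orth_compl T) (axis j 1) $ k = orth_proj (orth_compl T) (axis k 1) $ j" for j k :: 'n
  proof -
    have "orth_proj (orth_compl T) (axis j 1) $ k = orth_proj (orth_compl T) (axis j 1) \<bullet> axis k 1"
      by (simp add: inner_axis)
    also have "\<dots> = axis j 1 \<bullet> orth_proj (orth_compl T) (axis k 1)" by (rule orth_proj_selfadj)
    also have "\<dots> = orth_proj (orth_compl T) (axis k 1) $ j" by (simp add: inner_axis' )
    finally show ?thesis .
  qed
  then show ?thesis by (simp add: vec_eq_iff transpose_def proj_mat_entry)
qed

lemma col_orth:
  fixes A :: "real^'n^'m"
  assumes "u \<in> span (columns A)"
  shows "u \<bullet> orth_proj (orth_compl (span (columns A))) w = 0"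
proof -
  have "orth_proj (orth_compl (span (columns A))) w \<in> orth_compl (span (columns A))"
    using orth_proj_props[of "span (columns A)" w] by simp
  then show ?thesis using assms unfolding orth_compl_def orthogonal_def by (auto simp: inner_commute)
qed

lemma row_orth:
  fixes A :: "real^'n^'m"
  assumes "u \<in> span (rows A)"
  shows "u \<bullet> orth_proj (orth_compl (span (rows A))) w = 0"
proof -
  have "orth_proj (orth_compl (span (rows A))) w \<in> orth_compl (span (rows A))"
    using orth_proj_props[of "span (rows A)" w] by simp
  then show ?thesis using assms unfolding orth_compl_def orthogonal_def by (auto simp: inner_commute)
qed

lemma AtPu_zero:
  fixes A :: "real^'n^'m"
  shows "transpose A ** proj_mat (orth_compl (S_U A)) = 0"
proof -
  have "(\<Sum>k\<in>UNIV. A$k$i * orth_proj (orth_compl (S_U A)) (axis j 1) $ k) = 0" for i j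
  proof -
    have "column i A \<in> span (columns A)" by (auto simp: columns_def intro: span_base)
    then have "column i A \<bullet> orth_proj (orth_compl (S_U A)) (axis j 1) = 0"
      unfolding S_U_def by (rule col_orth)
    then show ?thesis by (simp add: inner_vec_def column_def)
  qed
  then show ?thesis by (simp add: vec_eq_iff matrix_matrix_mult_def transpose_def proj_mat_entry)
qed

lemma APv_zero:
  fixes A :: "real^'n^'m"
  shows "A ** proj_mat (orth_compl (S_V A)) = 0"
proof -
  have "(\<Sum>k\<in>UNIV. A$i$k * orth_proj (orth_compl (S_V A)) (axis j 1) $ k) = 0" for i j
  proof -
    have "row i A \<in> span (rows A)" by (auto simp: rows_def intro: span_base)
    then have "row i A \<bullet> orth_proj (orth_compl (S_V A)) (axis j 1) = 0"
      unfolding S_V_def by (rule row_orth)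
    then show ?thesis by (simp add: inner_vec_def row_def)
  qed
  then show ?thesis by (simp add: vec_eq_iff matrix_matrix_mult_def proj_mat_entry)
qed

lemma AtP_zero:
  fixes A B :: "real^'n^'m"
  shows "transpose A ** P_perp A B = 0"
  unfolding P_perp_def by (metis AtPu_zero matrix_mul_assoc times0_left)

lemma APt_zero:
  fixes A B :: "real^'n^'m"
  shows "A ** transpose (P_perp A B) = 0"
proof -
  have "transpose (P_perp A B) = proj_mat (orth_compl (S_V A)) ** (transpose B ** transpose (proj_mat (orth_compl (S_U A))))"
    unfolding P_perp_def by (simp add: matrix_transpose_mul proj_mat_sym matrix_mul_assoc)
  then show ?thesis by (metis APv_zero matrix_mul_assoc times0_left)
qed

lemma transpose_zero: "transpose (0::'a::zero^'n^'m) = 0"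
  by (simp add: vec_eq_iff transpose_def)

lemma transpose_plus: "transpose (A + B :: 'a::monoid_add^'n^'m) = transpose A + transpose B"
  by (simp add: vec_eq_iff transpose_def)

lemma matrix_add_rdistrib': "((A + B) ** C) = (A ** C) + (B ** C)"
  by (simp add: vec_eq_iff matrix_matrix_mult_def sum.distrib distrib_right)

lemma gram_split:
  fixes A B :: "real^'n^'m"
  defines "P \<equiv> P_perp A B"
  shows "transpose (A + P) ** (A + P) = transpose A ** A + transpose P ** P"
    and "(transpose A ** A) ** (transpose P ** P) = 0"
proof -
  have 1: "transpose A ** P = 0" unfolding P_def by (rule AtP_zero)
  have 2: "transpose P ** A = 0" using arg_cong[OF 1, of transpose] by (simp add: matrix_transpose_mul transpose_zero)
  show "transpose (A + P) ** (A + P) = transpose A ** A + transpose P ** P"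
    by (simp add: transpose_plus matrix_add_ldistrib matrix_add_rdistrib' 1 2)
  have 3: "A ** transpose P = 0" unfolding P_def by (rule APt_zero)
  show "(transpose A ** A) ** (transpose P ** P) = 0"
    by (metis 3 matrix_mul_assoc times0_left times0_right)
qed



lemma det_scale_entries:
  fixes A :: "'a::comm_ring_1^'n^'n"
  shows "det (\<chi> i j. c * A$i$j) = c ^ CARD('n) * det A"
  unfolding det_def
  by (simp add: prod.distrib sum_distrib_left mult_ac)

lemma cpoly_mult_zero:
  fixes M1 M2 :: "'a::comm_ring_1^'n^'n"
  assumes z: "M1 ** M2 = 0"
  shows "cpoly M1 * cpoly M2 = [:0,1:] ^ CARD('n) * cpoly (M1 + M2)"
proof -
  define x :: "'a poly" where "x = [:0,1:]"
  define X1 where "X1 = (\<chi> i j. (if i = j then x else 0) - [:M1$i$j:])"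
  define X2 where "X2 = (\<chi> i j. (if i = j then x else 0) - [:M2$i$j:])"
  define X3 where "X3 = (\<chi> i j. (if i = j then x else 0) - [:(M1 + M2)$i$j:])"
  have z': "(\<Sum>k\<in>UNIV. M1$i$k * M2$k$j) = 0" for i j
    using arg_cong[OF z, of "\<lambda>M. M$i$j"] by (simp add: matrix_matrix_mult_def)
  have "(X1 ** X2)$i$j = x * X3$i$j" for i j
  proof -
    have "(X1 ** X2)$i$j = (\<Sum>k\<in>UNIV. ((if i = k then x else 0) - [:M1$i$k:]) * ((if k = j then x else 0) - [:M2$k$j:]))"
      by (simp add: matrix_matrix_mult_def X1_def X2_def)
    also have "\<dots> = (\<Sum>k\<in>UNIV. (if i = k then x * ((if k = j then x else 0) - [:M2$k$j:]) else 0)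
        - (if k = j then [:M1$i$k:] * x else 0) + [:M1$i$k * M2$k$j:])"
      by (rule sum.cong) (auto simp: algebra_simps)
    also have "\<dots> = x * ((if i = j then x else 0) - [:M2$i$j:]) - [:M1$i$j:] * x + [:\<Sum>k\<in>UNIV. M1$i$k * M2$k$j:]"
      by (simp add: sum.distrib sum_subtractf hom_sum_gen[where h="\<lambda>a. [:a:]", symmetric])
    also have "\<dots> = x * X3$i$j"
      by (simp add: z' X3_def algebra_simps smult_add_left)
    finally show ?thesis .
  qed
  then have "X1 ** X2 = (\<chi> i j. x * X3$i$j)" by (simp add: vec_eq_iff)
  then have "det X1 * det X2 = x ^ CARD('n) * det X3"
    by (metis det_mul det_scale_entries)
  then show ?thesis unfolding cpoly_def X1_def X2_def X3_def x_def .
qed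



lemma sorted_sum_prefix:
  fixes S :: "real multiset" and F :: "real \<Rightarrow> real"
  assumes nn: "\<And>s. s \<in># S \<Longrightarrow> s \<ge> 0" and sz: "size S = n" and kn: "k \<le> n"
    and cz: "count S 0 \<ge> n - k" and F0: "F 0 = 0"
  shows "(\<Sum>j<k. F (rev (sorted_list_of_multiset S) ! j)) = (\<Sum>s\<in>#S. F s)"
proof -
  define z where "z = count S 0"
  define S' where "S' = filter_mset (\<lambda>s. s \<noteq> 0) S"
  define xs where "xs = sorted_list_of_multiset S'"
  have Sdec: "S = replicate_mset z 0 + S'"
    unfolding z_def S'_def by (rule multiset_eqI) (auto simp: count_replicate_mset)
  have pos: "s > 0" if "s \<in> set xs" for s
    using that nn unfolding xs_def S'_def by force
  have sorted_ys: "sorted (replicate z 0 @ xs)"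
    using pos by (auto simp: sorted_append xs_def intro: less_imp_le)
  have mset_ys: "mset (replicate z 0 @ xs) = S"
    using Sdec by (simp add: xs_def)
  have L0: "sorted_list_of_multiset S = replicate z 0 @ xs"
  proof -
    have "sort (sorted_list_of_multiset S) = replicate z 0 @ xs"
      by (rule properties_for_sort) (use mset_ys sorted_ys in auto)
    moreover have "sort (sorted_list_of_multiset S) = sorted_list_of_multiset S"
      by (simp add: sorted_sort_id)
    ultimately show ?thesis by simp
  qed
  define L where "L = rev (sorted_list_of_multiset S)"
  have L: "L = rev xs @ replicate z 0" unfolding L_def L0 by simp
  have lenL: "length L = n" unfolding L_def using sz
    by (metis length_rev mset_sorted_list_of_multiset size_mset)
  have lxs: "length xs \<le> k" using lenL cz unfolding L z_def by simp
  have zero: "L ! j = 0" if "length xs \<le> j" "j < n" for j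
    using that lenL unfolding L by (simp add: nth_append)
  have "(\<Sum>j<k. F (L ! j)) = (\<Sum>j<n. F (L ! j))"
  proof -
    have "(\<Sum>j<n. F (L ! j)) = (\<Sum>j<k. F (L ! j)) + (\<Sum>j\<in>{k..<n}. F (L ! j))"
      using kn by (metis atLeast0LessThan sum.atLeastLessThan_concat zero_le)
    moreover have "(\<Sum>j\<in>{k..<n}. F (L ! j)) = 0"
      using zero lxs F0 by (intro sum.neutral) auto
    ultimately show ?thesis by simp
  qed
  also have "\<dots> = sum_list (map F L)"
    using lenL by (simp add: sum_list_sum_nth atLeast0LessThan)
  also have "\<dots> = (\<Sum>s\<in>#S. F s)"
    unfolding L_def by (metis mset_map mset_rev mset_sorted_list_of_multiset sum_mset_sum_list)
  finally show ?thesis unfolding L_def .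
qed

lemma count_image_sqrt_ge: "count (image_mset sqrt R) 0 \<ge> count R (0::real)"
proof -
  have "R = filter_mset (\<lambda>r. r = 0) R + filter_mset (\<lambda>r. \<not> r = 0) R"
    by (rule multiset_partition)
  also have "filter_mset (\<lambda>r. r = 0) R = replicate_mset (count R 0) 0"
    by (rule multiset_eqI) (auto simp: count_replicate_mset)
  finally have "image_mset sqrt R = replicate_mset (count R 0) 0 + image_mset sqrt (filter_mset (\<lambda>r. \<not> r = 0) R)"
    by (metis image_mset_union image_replicate_mset real_sqrt_zero)
  then show ?thesis by simp
qed

lemma TL1_formula:
  fixes X :: "real^'n^'m"
  shows "TL1 a X = (\<Sum>r\<in>#proots (cpoly (transpose X ** X)). (a + 1) * sqrt r / (a + sqrt r))"
proof -
  define R where "R = proots (cpoly (transpose X ** X))"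
  have sym: "transpose (transpose X ** X) = transpose X ** X"
    by (simp add: matrix_transpose_mul)
  have szR: "size R = CARD('n)" unfolding R_def by (rule sym_size_proots[OF sym])
  have nn: "r \<ge> 0" if "r \<in># R" for r using gram_roots_nonneg that unfolding R_def by blast
  have cz: "count R 0 \<ge> CARD('n) - CARD('m)" unfolding R_def by (rule gram_zero_mult)
  define S where "S = image_mset sqrt R"
  have czS: "count S 0 \<ge> CARD('n) - min CARD('m) CARD('n)"
    using cz count_image_sqrt_ge[of R] unfolding S_def by linarith
  have "TL1 a X = (\<Sum>j<min CARD('m) CARD('n). (\<lambda>s. (a + 1) * s / (a + s)) (rev (sorted_list_of_multiset S) ! j))"
    unfolding TL1_def singular_values_def charpoly_cpoly S_def R_def by simp
  also have "\<dots> = (\<Sum>s\<in>#S. (a + 1) * s / (a + s))"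
    by (rule sorted_sum_prefix[where n="CARD('n)"]) (use nn szR czS in \<open>auto simp: S_def\<close>)
  also have "\<dots> = (\<Sum>r\<in>#R. (a + 1) * sqrt r / (a + sqrt r))"
    unfolding S_def by (simp add: multiset.map_comp o_def)
  finally show ?thesis unfolding R_def .
qed

theorem lemma4:
  fixes A B :: "real^'n^'m" and a :: real
  assumes "a > 0"
  shows "TL1 a (A + P_perp A B) = TL1 a A + TL1 a (P_perp A B)"
proof -
  define P where "P = P_perp A B"
  define M1 where "M1 = transpose A ** A"
  define M2 where "M2 = transpose P ** P"
  define G where "G = (\<lambda>r::real. (a + 1) * sqrt r / (a + sqrt r))"
  have CC: "transpose (A + P) ** (A + P) = M1 + M2"
    unfolding M1_def M2_def P_def by (rule gram_split)
  have z: "M1 ** M2 = 0"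
    unfolding M1_def M2_def P_def by (rule gram_split)
  have id: "cpoly M1 * cpoly M2 = [:0,1:] ^ CARD('n) * cpoly (M1 + M2)"
    by (rule cpoly_mult_zero[OF z])
  have nz: "cpoly M \<noteq> 0" for M :: "real^'n^'n" using cpoly_degree_lead[of M] by auto
  have "proots (cpoly M1) + proots (cpoly M2) = proots (cpoly M1 * cpoly M2)"
    using nz by (simp add: proots_mult)
  also have "\<dots> = proots ([:0,1:] ^ CARD('n)) + proots (cpoly (M1 + M2))"
    unfolding id using nz by (simp add: proots_mult)
  also have "proots ([:0,1:] ^ CARD('n)) = replicate_mset CARD('n) (0::real)"
    using proots_linear_factor[of "0::real"] by (simp add: proots_power)
  finally have eq: "proots (cpoly M1) + proots (cpoly M2) = replicate_mset CARD('n) 0 + proots (cpoly (M1 + M2))" .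
  have "TL1 a A + TL1 a P = (\<Sum>r\<in>#proots (cpoly M1). G r) + (\<Sum>r\<in>#proots (cpoly M2). G r)"
    unfolding TL1_formula M1_def M2_def G_def ..
  also have "\<dots> = (\<Sum>r\<in>#proots (cpoly M1) + proots (cpoly M2). G r)" by simp
  also have "\<dots> = (\<Sum>r\<in>#proots (cpoly (M1 + M2)). G r)" unfolding eq by (simp add: G_def)
  also have "\<dots> = TL1 a (A + P)" unfolding TL1_formula CC G_def ..
  finally show ?thesis unfolding P_def by simp
qed


end
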